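(* Let $\lambda>0$ and $p\in\left(\frac{2\lambda+1}{2\lambda+2},1\right]$. There is a constant $C>0$ depending only on $\lambda$ and $p$ such that the following holds. Let $f$ be a measurable function on $\mathbb{R}_+$ such that (i) $\int_0^\infty f(x)x^{2\lambda}dx=0$; (ii) there exist $x_1,x_2,r\in\mathbb{R}_+$ and $C_1,C_2>0$ with $|f(x)|\le C_1\chi_{I(x_1,r)}(x)+C_2\chi_{I(x_2,r)}(x)$ for all $x\in\mathbb{R}_+$; (iii) $|x_1-x_2|\ge 4r$. Then $f\in H^p(\mathbb{R}_+,dm_\lambda)$ and $$\|f\|_{H^p(\mathbb{R}_+,dm_\lambda)}^p\le C\left(\frac{|x_1-x_2|}{r}\right)^{1-p}\log_2\!\left(\frac{|x_1-x_2|}{r}\right)\Big[C_1^p\,m_\lambda(I(x_1,r))+C_2^p\,m_\lambda(I(x_2,r))\Big].$$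
   Context: Fix $\lambda>0$. $\mathbb{R}_+=(0,\infty)$, $dm_\lambda(x)=x^{2\lambda}dx$, and $I(x,s)=(x-s,x+s)\cap\mathbb{R}_+$ for $x,s>0$; $\chi_E$ is the indicator of $E$. For $p\in\left(\frac{2\lambda+1}{2\lambda+2},1\right]$, a $p$-atom is a function $a$ supported in an open bounded interval $I\subset\mathbb{R}_+$ with $\|a\|_{L^\infty}\le m_\lambda(I)^{-1/p}$ and $\int_0^\infty a\,dm_\lambda=0$. The Hardy space $H^p(\mathbb{R}_+,dm_\lambda)$ consists of the $f$ that can be written as $f=\sum_k\alpha_ka_k$ (in $L^p(dm_\lambda)$) with $a_k$ $p$-atoms and $\sum_k|\alpha_k|^p<\infty$, with quasi-norm $\|f\|_{H^p(\mathbb{R}_+,dm_\lambda)}\simeq\inf(\sum_k|\alpha_k|^p)^{1/p}$ over all such decompositions. *)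

theory Defs
  imports "HOL-Analysis.Analysis"
begin

definition mlam :: "real \<Rightarrow> real measure" where
  "mlam lam = density lborel (\<lambda>x. ennreal (indicator {0<..} x * x powr (2 * lam)))"

definition Iint :: "real \<Rightarrow> real \<Rightarrow> real set" where
  "Iint x s = {x - s<..<x + s} \<inter> {0<..}"

definition patom :: "real \<Rightarrow> real \<Rightarrow> (real \<Rightarrow> real) \<Rightarrow> bool" where
  "patom lam p a \<longleftrightarrow> a \<in> borel_measurable borel \<and>
     (\<exists>c d. 0 \<le> c \<and> c < d \<and>
        (AE x in mlam lam. x \<notin> {c<..<d} \<longrightarrow> a x = 0) \<and>
        (AE x in mlam lam. \<bar>a x\<bar> \<le> measure (mlam lam) {c<..<d} powr (-1 / p))) \<and>
     integrable (mlam lam) a \<and> integral\<^sup>L (mlam lam) a = 0"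

definition atomic_decomp :: "real \<Rightarrow> real \<Rightarrow> (real \<Rightarrow> real) \<Rightarrow> (nat \<Rightarrow> real)
    \<Rightarrow> (nat \<Rightarrow> real \<Rightarrow> real) \<Rightarrow> bool" where
  "atomic_decomp lam p f \<alpha> a \<longleftrightarrow>
     (\<forall>k. patom lam p (a k)) \<and> summable (\<lambda>k. \<bar>\<alpha> k\<bar> powr p) \<and>
     ((\<lambda>N. \<integral>\<^sup>+ x. ennreal (\<bar>f x - (\<Sum>k<N. \<alpha> k * a k x)\<bar> powr p) \<partial>mlam lam)
        \<longlonglongrightarrow> 0)"

definition in_Hp :: "real \<Rightarrow> real \<Rightarrow> (real \<Rightarrow> real) \<Rightarrow> bool" where
  "in_Hp lam p f \<longleftrightarrow> (\<exists>\<alpha> a. atomic_decomp lam p f \<alpha> a)"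

definition Hp_norm_p :: "real \<Rightarrow> real \<Rightarrow> (real \<Rightarrow> real) \<Rightarrow> real" where
  "Hp_norm_p lam p f = Inf {(\<Sum>k. \<bar>\<alpha> k\<bar> powr p) | \<alpha> a. atomic_decomp lam p f \<alpha> a}"

end

theory Submission
  imports Defs
begin

lemma sets_mlam[simp, measurable_cong]: "sets (mlam lam) = sets borel"
  unfolding mlam_def by simp

lemma space_mlam[simp]: "space (mlam lam) = UNIV"
  unfolding mlam_def by simp

lemma meas_mlam: "(f \<in> borel_measurable (mlam lam)) = (f \<in> borel_measurable borel)"
  by (subst measurable_cong_sets[OF sets_mlam refl]) (rule refl)

lemma AE_pos: "AE x in mlam lam. x > 0"
  unfolding mlam_def
  apply (subst AE_density)
   apply measurable
  by (auto simp: indicator_def)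

lemma emeasure_mlam: "A \<in> sets borel \<Longrightarrow> emeasure (mlam lam) A =
   (\<integral>\<^sup>+ x. ennreal (indicator {0<..} x * x powr (2 * lam)) * indicator A x \<partial>lborel)"
  unfolding mlam_def by (subst emeasure_density) auto

lemma mlam_upper:
  assumes "lam > 0" "0 \<le> a" "a < b"
  shows "emeasure (mlam lam) {a<..<b} \<le> ennreal ((b - a) * b powr (2*lam))"
proof -
  have "emeasure (mlam lam) {a<..<b} =
    (\<integral>\<^sup>+ x. ennreal (indicator {0<..} x * x powr (2 * lam)) * indicator {a<..<b} x \<partial>lborel)"
    by (rule emeasure_mlam) simp
  also have "\<dots> \<le> (\<integral>\<^sup>+ x. ennreal (b powr (2*lam)) * indicator {a<..<b} x \<partial>lborel)"
  proof (rule nn_integral_mono)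
    fix x :: real
    show "ennreal (indicator {0<..} x * x powr (2 * lam)) * indicator {a<..<b} x
         \<le> ennreal (b powr (2 * lam)) * indicator {a<..<b} x"
    proof (cases "x \<in> {a<..<b}")
      case True
      then have "x > 0" "x \<le> b" using assms by auto
      then have "x powr (2*lam) \<le> b powr (2*lam)" using assms by (intro powr_mono2) auto
      then show ?thesis using True \<open>x>0\<close> by (auto simp: indicator_def)
    qed (auto simp: indicator_def)
  qed
  also have "\<dots> = ennreal (b powr (2*lam)) * ennreal (b - a)"
    by (subst nn_integral_cmult_indicator) (use assms in auto)
  also have "\<dots> = ennreal ((b - a) * b powr (2*lam))"
    using assms by (simp add: ennreal_mult' mult.commute)
  finally show ?thesis .
qed

lemma mlam_lower:
  assumes "lam > 0" "0 \<le> a" "a < b"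
  shows "ennreal ((b - a) / 2 * (b/2) powr (2*lam)) \<le> emeasure (mlam lam) {a<..<b}"
proof -
  define c where "c = max a (b/2)"
  have c: "0 < c" "c < b" "b/2 \<le> c" "(b - a)/2 \<le> b - c" using assms by (auto simp: c_def)
  have "ennreal ((b - a) / 2 * (b/2) powr (2*lam)) \<le> ennreal ((b - c) * c powr (2*lam))"
  proof -
    have "(b/2) powr (2*lam) \<le> c powr (2*lam)" using c assms by (intro powr_mono2) auto
    then show ?thesis using c by (intro ennreal_leI mult_mono) auto
  qed
  also have "\<dots> = ennreal (c powr (2*lam)) * ennreal (b - c)"
    using c by (simp add: ennreal_mult' mult.commute)
  also have "\<dots> = (\<integral>\<^sup>+ x. ennreal (c powr (2*lam)) * indicator {c<..<b} x \<partial>lborel)"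
    by (subst nn_integral_cmult_indicator) (use c in auto)
  also have "\<dots> \<le> (\<integral>\<^sup>+ x. ennreal (indicator {0<..} x * x powr (2 * lam)) * indicator {a<..<b} x \<partial>lborel)"
  proof (rule nn_integral_mono)
    fix x :: real
    show "ennreal (c powr (2 * lam)) * indicator {c<..<b} x \<le>
          ennreal (indicator {0<..} x * x powr (2 * lam)) * indicator {a<..<b} x"
    proof (cases "x \<in> {c<..<b}")
      case True
      then have "x > 0" "c \<le> x" "x \<in> {a<..<b}" using c by (auto simp: c_def)
      then have "c powr (2*lam) \<le> x powr (2*lam)" using assms c by (intro powr_mono2) auto
      then show ?thesis using True \<open>x>0\<close> \<open>x \<in> {a<..<b}\<close> by (auto simp: indicator_def)
    qed (auto simp: indicator_def)
  qed
  also have "\<dots> = emeasure (mlam lam) {a<..<b}"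
    by (rule emeasure_mlam[symmetric]) simp
  finally show ?thesis .
qed

lemma mlam_fin: assumes "lam > 0" "0 \<le> a" "a < b"
  shows "emeasure (mlam lam) {a<..<b} < top"
  using mlam_upper[OF assms] ennreal_less_top by (rule le_less_trans)

lemma mlam_upper': assumes "lam > 0" "0 \<le> a" "a < b"
  shows "measure (mlam lam) {a<..<b} \<le> (b - a) * b powr (2*lam)"
  using mlam_upper[OF assms] mlam_fin[OF assms]
  by (simp add: emeasure_eq_ennreal_measure ennreal_le_iff2) (smt (verit) assms ennreal_le_iff powr_ge_zero mult_nonneg_nonneg)

lemma mlam_lower': assumes "lam > 0" "0 \<le> a" "a < b"
  shows "(b - a) / 2 * (b/2) powr (2*lam) \<le> measure (mlam lam) {a<..<b}"
  using mlam_lower[OF assms] mlam_fin[OF assms]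
  by (simp add: emeasure_eq_ennreal_measure)

lemma mlam_pos: assumes "lam > 0" "0 \<le> a" "a < b"
  shows "0 < measure (mlam lam) {a<..<b}"
proof -
  have "0 < (b - a) / 2 * (b/2) powr (2*lam)" using assms by auto
  then show ?thesis using mlam_lower'[OF assms] by linarith
qed

lemma Iint_eq: "x > 0 \<Longrightarrow> r > 0 \<Longrightarrow> Iint x r = {max 0 (x - r)<..<x + r}"
  unfolding Iint_def by auto

lemma mI_fin: "lam > 0 \<Longrightarrow> x > 0 \<Longrightarrow> r > 0 \<Longrightarrow> emeasure (mlam lam) (Iint x r) < top"
  by (subst Iint_eq) (auto intro!: mlam_fin)

lemma mI_pos: "lam > 0 \<Longrightarrow> x > 0 \<Longrightarrow> r > 0 \<Longrightarrow> 0 < measure (mlam lam) (Iint x r)"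
  by (subst Iint_eq) (auto intro!: mlam_pos)

lemma mI_lower: assumes "lam > 0" "x > 0" "r > 0"
  shows "r / 2 * ((x + r)/2) powr (2*lam) \<le> measure (mlam lam) (Iint x r)"
proof -
  have "r / 2 * ((x + r)/2) powr (2*lam) \<le> (x + r - max 0 (x - r)) / 2 * ((x + r)/2) powr (2*lam)"
    using assms by (intro mult_right_mono) auto
  also have "\<dots> \<le> measure (mlam lam) {max 0 (x - r)<..<x + r}"
    by (rule mlam_lower') (use assms in auto)
  also have "\<dots> = measure (mlam lam) (Iint x r)" using assms by (simp add: Iint_eq)
  finally show ?thesis .
qed

lemma mI_upper: assumes "lam > 0" "x > 0" "r > 0"
  shows "measure (mlam lam) (Iint x r) \<le> 2 * r * (x + r) powr (2*lam)"
proof -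
  have "measure (mlam lam) (Iint x r) \<le> (x + r - max 0 (x - r)) * (x + r) powr (2*lam)"
    using assms by (subst Iint_eq) (auto intro!: mlam_upper')
  also have "\<dots> \<le> 2 * r * (x + r) powr (2*lam)"
    by (intro mult_right_mono) auto
  finally show ?thesis .
qed

lemma doubling: assumes "lam > 0" "x > 0" "r > 0" "y > 0" "s > 0" "s \<le> 2 * r" "y + s \<le> 3 * (x + r)"
  shows "measure (mlam lam) (Iint y s) \<le> (8 * 6 powr (2*lam)) * measure (mlam lam) (Iint x r)"
proof -
  let ?e = "2*lam"
  have "measure (mlam lam) (Iint y s) \<le> 2 * s * (y + s) powr ?e" by (rule mI_upper) fact+
  also have "\<dots> \<le> 2 * (2 * r) * (3 * (x + r)) powr ?e"
    using assms by (intro mult_mono powr_mono2) auto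
  also have "\<dots> = (8 * 6 powr ?e) * (r / 2 * ((x + r)/2) powr ?e)"
  proof -
    have "6 powr ?e = 3 powr ?e * 2 powr ?e" using powr_mult[of 3 2 ?e] by simp
    moreover have "(3 * (x + r)) powr ?e = 3 powr ?e * (x + r) powr ?e" by (intro powr_mult; use assms in auto)
    moreover have "((x + r)/2) powr ?e = (x + r) powr ?e / 2 powr ?e" using assms by (simp add: powr_divide)
    ultimately show ?thesis by (simp add: field_simps)
  qed
  also have "\<dots> \<le> (8 * 6 powr ?e) * measure (mlam lam) (Iint x r)"
    using assms by (intro mult_left_mono mI_lower) auto
  finally show ?thesis .
qed

lemma far: assumes "lam > 0" "x1 > 0" "r > 0" "x1 < x2" "t > 0" "t \<le> 4 * (x2 - x1)"
  shows "measure (mlam lam) (Iint x1 t) \<le> (16 * 10 powr (2*lam)) * ((x2 - x1) / r) * measure (mlam lam) (Iint x2 r)"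
proof -
  let ?e = "2*lam"
  have "measure (mlam lam) (Iint x1 t) \<le> 2 * t * (x1 + t) powr ?e" by (rule mI_upper) fact+
  also have "\<dots> \<le> 2 * (4 * (x2 - x1)) * (5 * x2) powr ?e"
    using assms by (intro mult_mono powr_mono2) auto
  also have "\<dots> = (16 * 10 powr ?e) * ((x2 - x1) / r) * (r / 2 * (x2/2) powr ?e)"
  proof -
    have e1: "10 powr ?e = 5 powr ?e * 2 powr ?e" using powr_mult[of 5 2 ?e] by simp
    have e2: "(5 * x2) powr ?e = 5 powr ?e * x2 powr ?e" by (intro powr_mult; use assms in auto)
    have e3: "(x2/2) powr ?e = x2 powr ?e / 2 powr ?e" using assms by (simp add: powr_divide)
    show ?thesis using \<open>r > 0\<close> unfolding e1 e2 e3 by (simp add: field_simps)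
  qed
  also have "\<dots> \<le> (16 * 10 powr ?e) * ((x2 - x1) / r) * (r / 2 * ((x2 + r)/2) powr ?e)"
    using assms by (intro mult_left_mono powr_mono2) auto
  also have "\<dots> \<le> (16 * 10 powr ?e) * ((x2 - x1) / r) * measure (mlam lam) (Iint x2 r)"
    using assms by (intro mult_left_mono mI_lower) auto
  finally show ?thesis .
qed

lemma intg_ind: fixes g :: "real \<Rightarrow> real" and B :: real assumes "g \<in> borel_measurable borel" "S \<in> sets borel" "emeasure (mlam lam) S < top"
  "\<And>x. \<bar>g x\<bar> \<le> B * indicator S x"
  shows "integrable (mlam lam) g"
proof -
  have i: "integrable (mlam lam) (\<lambda>x. B * indicator S x)"
    using assms by (auto simp: infinity_ennreal_def)
  have m: "g \<in> borel_measurable (mlam lam)" using assms(1) by (simp add: meas_mlam)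
  have a: "AE x in mlam lam. norm (g x) \<le> norm (B * indicator S x)"
    using assms(4) by (intro AE_I2) (smt (verit, best) real_norm_def)
  show ?thesis using Bochner_Integration.integrable_bound[OF i m a] .
qed

lemma patomI:
  fixes g :: "real \<Rightarrow> real" and B :: real
  assumes lam: "lam > 0" and p: "p > 0" and gm: "g \<in> borel_measurable borel" and cd: "0 \<le> c" "c < d"
    and supp: "\<And>x. x \<notin> {c<..<d} \<Longrightarrow> g x = 0" and bd: "\<And>x. \<bar>g x\<bar> \<le> B"
    and int0: "integral\<^sup>L (mlam lam) g = 0"
  shows "patom lam p (\<lambda>x. g x / (B * measure (mlam lam) {c<..<d} powr (1/p)))"
proof -
  define m where "m = measure (mlam lam) {c<..<d}"
  have m: "m > 0" unfolding m_def using lam cd by (rule mlam_pos)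
  define \<kappa> where "\<kappa> = B * m powr (1/p)"
  have B0: "B \<ge> 0" using bd[of 0] by linarith
  have gi: "integrable (mlam lam) g"
  proof -
    have "\<bar>g x\<bar> \<le> B * indicator {c<..<d} x" for x
      using bd[of x] supp[of x] by (cases "x \<in> {c<..<d}") auto
    then show ?thesis using intg_ind[OF gm _ mlam_fin[OF lam cd], of B] by simp
  qed
  have bound: "\<bar>g x / \<kappa>\<bar> \<le> m powr (-1/p)" for x
  proof (cases "\<kappa> = 0")
    case True then show ?thesis by simp
  next
    case False
    then have "B > 0" using B0 unfolding \<kappa>_def by auto
    have kp: "\<kappa> > 0" unfolding \<kappa>_def using \<open>B > 0\<close> m by auto
    have "\<bar>g x / \<kappa>\<bar> = \<bar>g x\<bar> / \<kappa>" using kp by simp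
    also have "\<dots> \<le> B / \<kappa>" using kp bd[of x] by (simp add: divide_right_mono)
    also have "\<dots> = m powr (-1/p)" unfolding \<kappa>_def using \<open>B > 0\<close> m
      by (simp add: powr_minus_divide divide_simps)
    finally show ?thesis .
  qed
  have h1: "(\<lambda>x. g x / \<kappa>) \<in> borel_measurable borel" using gm by measurable
  have h2: "AE x in mlam lam. x \<notin> {c<..<d} \<longrightarrow> g x / \<kappa> = 0" using supp by auto
  have h3: "AE x in mlam lam. \<bar>g x / \<kappa>\<bar> \<le> measure (mlam lam) {c<..<d} powr (- 1 / p)"
    using bound unfolding m_def by auto
  have h4: "integrable (mlam lam) (\<lambda>x. g x / \<kappa>)" using gi by simp
  have h5: "(\<integral>x. g x / \<kappa> \<partial>mlam lam) = 0" using int0 by simp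
  show ?thesis unfolding patom_def \<kappa>_def[symmetric] m_def[symmetric]
    using h1 h2 h3 h4 h5 cd unfolding m_def by blast
qed

definition psi :: "real \<Rightarrow> real \<Rightarrow> real \<Rightarrow> real \<Rightarrow> real" where
  "psi lam z a y = indicator (Iint z a) y / measure (mlam lam) (Iint z a)"

lemma Iint_borel[measurable]: "Iint z a \<in> sets borel"
  unfolding Iint_def by measurable

lemma psi_meas[measurable]: "psi lam z a \<in> borel_measurable borel"
  unfolding psi_def by measurable

lemma psi_int: assumes "lam > 0" "z > 0" "a > 0"
  shows "integrable (mlam lam) (psi lam z a)" "integral\<^sup>L (mlam lam) (psi lam z a) = 1"
proof -
  have fin: "emeasure (mlam lam) (Iint z a) < top" using mI_fin[OF assms] by (simp add: top.not_eq_extremum)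
  have i: "integrable (mlam lam) (indicator (Iint z a) :: real \<Rightarrow> real)"
    using fin by (intro integrable_real_indicator) (auto simp: infinity_ennreal_def)
  then show "integrable (mlam lam) (psi lam z a)" unfolding psi_def by simp
  show "integral\<^sup>L (mlam lam) (psi lam z a) = 1"
    unfolding psi_def using mI_pos[OF assms] by simp
qed

lemma psi_nonneg: "lam > 0 \<Longrightarrow> z > 0 \<Longrightarrow> a > 0 \<Longrightarrow> 0 \<le> psi lam z a y"
  unfolding psi_def using mI_pos[of lam z a] by auto

lemma psi_le: "lam > 0 \<Longrightarrow> z > 0 \<Longrightarrow> a > 0 \<Longrightarrow> psi lam z a y \<le> 1 / measure (mlam lam) (Iint z a)"
  unfolding psi_def using mI_pos[of lam z a] by (auto simp: indicator_def)

lemma psi_out: "y \<notin> Iint z a \<Longrightarrow> psi lam z a y = 0"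
  unfolding psi_def by simp

lemma step_facts:
  fixes s :: real
  assumes "lam > 0" "z1 > 0" "a > 0" "z2 > 0" "b > 0"
  defines "g \<equiv> \<lambda>y. s * (psi lam z1 a y - psi lam z2 b y)"
  shows "g \<in> borel_measurable borel"
    "integral\<^sup>L (mlam lam) g = 0"
    "\<And>y. \<bar>g y\<bar> \<le> \<bar>s\<bar> * (1 / measure (mlam lam) (Iint z1 a) + 1 / measure (mlam lam) (Iint z2 b))"
    "\<And>y. y \<notin> Iint z1 a \<union> Iint z2 b \<Longrightarrow> g y = 0"
proof -
  show "g \<in> borel_measurable borel" unfolding g_def by measurable
  show "integral\<^sup>L (mlam lam) g = 0" unfolding g_def
    using psi_int[OF assms(1,2,3)] psi_int[OF assms(1,4,5)] by simp
  fix y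
  have "\<bar>psi lam z1 a y - psi lam z2 b y\<bar> \<le> 1 / measure (mlam lam) (Iint z1 a) + 1 / measure (mlam lam) (Iint z2 b)"
    using psi_nonneg[OF assms(1,2,3), of y] psi_nonneg[OF assms(1,4,5), of y]
      psi_le[OF assms(1,2,3), of y] psi_le[OF assms(1,4,5), of y] by linarith
  then show "\<bar>g y\<bar> \<le> \<bar>s\<bar> * (1 / measure (mlam lam) (Iint z1 a) + 1 / measure (mlam lam) (Iint z2 b))"
    unfolding g_def abs_mult by (intro mult_left_mono) auto
  show "y \<notin> Iint z1 a \<union> Iint z2 b \<Longrightarrow> g y = 0" unfolding g_def by (simp add: psi_out)
qed

lemma step_bound:
  fixes s mU mV mW mJ Q p :: real
  assumes "0 < p" "p \<le> 1" "Q \<ge> 1" "mU > 0" "mV > 0" "mW > 0" "mW \<le> Q * mU" "mW \<le> Q * mV" "mW \<le> mJ"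
  shows "(\<bar>s\<bar> * (1/mU + 1/mV)) powr p * mW \<le> 2 * Q * (\<bar>s\<bar> powr p * mJ powr (1 - p))"
proof -
  have "1/mU \<le> Q / mW" "1/mV \<le> Q / mW" using assms by (auto simp: field_simps)
  then have "(\<bar>s\<bar> * (1/mU + 1/mV)) \<le> \<bar>s\<bar> * (2*Q/mW)" by (intro mult_left_mono) auto
  then have "(\<bar>s\<bar> * (1/mU + 1/mV)) powr p \<le> (\<bar>s\<bar> * (2*Q/mW)) powr p"
    using assms by (intro powr_mono2) auto
  also have "\<dots> = \<bar>s\<bar> powr p * (2*Q) powr p / mW powr p"
    using assms by (simp add: powr_mult powr_divide)
  finally have A: "(\<bar>s\<bar> * (1/mU + 1/mV)) powr p * mW \<le> \<bar>s\<bar> powr p * (2*Q) powr p / mW powr p * mW"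
    using assms by (intro mult_right_mono) auto
  have "mW / mW powr p = mW powr (1 - p)" using assms by (simp add: powr_diff)
  have B: "(2*Q) powr p \<le> 2 * Q" using assms powr_le_one_le 
    by (metis le_add_same_cancel1 linorder_not_le mult_2 order_le_less_trans powr_mono powr_one zero_le_one zero_less_one)
  have C: "mW powr (1 - p) \<le> mJ powr (1 - p)" using assms by (intro powr_mono2) auto
  have "\<bar>s\<bar> powr p * (2*Q) powr p / mW powr p * mW = (2*Q) powr p * (\<bar>s\<bar> powr p * mW powr (1 - p))"
    by (simp flip: \<open>mW / mW powr p = mW powr (1 - p)\<close>)
  also have "\<dots> \<le> 2 * Q * (\<bar>s\<bar> powr p * mJ powr (1 - p))"
    using B C assms by (intro mult_mono) auto
  finally show ?thesis using A by linarith
qed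

lemma sum_split_nat: "(\<Sum>j<n + m. h j) = (\<Sum>j<n. h j) + (\<Sum>k<m. h (n + k :: nat))"
  by (induction m) (simp_all add: add_ac)

definition good :: "real \<Rightarrow> real \<Rightarrow> (real \<Rightarrow> real) \<Rightarrow> real \<Rightarrow> real \<Rightarrow> real \<Rightarrow> real \<Rightarrow> bool" where
  "good lam p g B z c Z \<longleftrightarrow> z > 0 \<and> c > 0 \<and> g \<in> borel_measurable borel \<and>
     (\<forall>y. y \<notin> Iint z c \<longrightarrow> g y = 0) \<and> (\<forall>y. \<bar>g y\<bar> \<le> B) \<and> integral\<^sup>L (mlam lam) g = 0 \<and>
     B powr p * measure (mlam lam) (Iint z c) \<le> Z"

lemma good_patom:
  assumes "good lam p g B z c Z" "lam > 0" "p > 0"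
  shows "patom lam p (\<lambda>y. g y / (B * measure (mlam lam) (Iint z c) powr (1/p)))"
proof -
  have z: "z > 0" "c > 0" using assms unfolding good_def by auto
  have "patom lam p (\<lambda>y. g y / (B * measure (mlam lam) {max 0 (z - c)<..<z + c} powr (1/p)))"
    using assms z unfolding good_def by (intro patomI) (auto simp: Iint_eq)
  then show ?thesis using z by (simp add: Iint_eq)
qed

lemma good_B: "good lam p g B z c Z \<Longrightarrow> B \<ge> 0"
  unfolding good_def by (meson abs_ge_zero order_trans)

lemma good_mult:
  assumes "good lam p g B z c Z" "lam > 0"
  shows "B * measure (mlam lam) (Iint z c) powr (1/p) * (g y / (B * measure (mlam lam) (Iint z c) powr (1/p))) = g y"
proof (cases "B = 0")
  case True
  then have "g y = 0" using assms unfolding good_def by (metis abs_le_zero_iff)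
  then show ?thesis by simp
next
  case False
  have "measure (mlam lam) (Iint z c) > 0" using assms unfolding good_def by (auto intro: mI_pos)
  then show ?thesis using False by simp
qed

lemma good_pow:
  assumes "good lam p g B z c Z" "lam > 0" "p > 0"
  shows "\<bar>B * measure (mlam lam) (Iint z c) powr (1/p)\<bar> powr p \<le> Z"
proof -
  have m: "measure (mlam lam) (Iint z c) > 0" using assms unfolding good_def by (auto intro: mI_pos)
  have B: "B \<ge> 0" using good_B[OF assms(1)] .
  have "\<bar>B * measure (mlam lam) (Iint z c) powr (1/p)\<bar> powr p = B powr p * measure (mlam lam) (Iint z c)"
    using m B assms(3) by (simp add: powr_mult powr_powr)
  then show ?thesis using assms(1) unfolding good_def by simp
qed

lemma decomp_from_good:
  fixes G :: "nat \<Rightarrow> real \<Rightarrow> real" and f :: "real \<Rightarrow> real"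
  assumes lam: "lam > 0" and p: "p > 0"
    and gd: "\<And>j. good lam p (G j) (BB j) (cen j) (rad j) Z"
    and zero: "\<And>j. j \<ge> N \<Longrightarrow> BB j = 0"
    and sumf: "\<And>y. y > 0 \<Longrightarrow> (\<Sum>j<N. G j y) = f y"
  shows "in_Hp lam p f \<and> Hp_norm_p lam p f \<le> real N * Z"
proof -
  define \<alpha> where "\<alpha> j = BB j * measure (mlam lam) (Iint (cen j) (rad j)) powr (1/p)" for j
  define a where "a j = (\<lambda>y. G j y / \<alpha> j)" for j
  have aG: "\<alpha> j * a j y = G j y" for j y
    unfolding \<alpha>_def a_def using good_mult[OF gd lam] .
  have Gz: "G j y = 0" if "j \<ge> N" for j y
    using gd[of j] zero[OF that] unfolding good_def by (metis abs_le_zero_iff)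
  have az: "\<alpha> j = 0" if "j \<ge> N" for j unfolding \<alpha>_def using zero[OF that] by simp
  have pa: "patom lam p (a j)" for j unfolding a_def \<alpha>_def using good_patom[OF gd lam p] .
  have fin: "\<And>j. j \<notin> {..<N} \<Longrightarrow> \<bar>\<alpha> j\<bar> powr p = 0" using az by simp
  have summ: "summable (\<lambda>j. \<bar>\<alpha> j\<bar> powr p)" by (rule summable_finite[of "{..<N}"]) (use fin in auto)
  have sumeq: "(\<Sum>j. \<bar>\<alpha> j\<bar> powr p) = (\<Sum>j<N. \<bar>\<alpha> j\<bar> powr p)" by (rule suminf_finite) (use fin in auto)
  have "(\<Sum>j<N. \<bar>\<alpha> j\<bar> powr p) \<le> of_nat (card {..<N}) * Z"
    by (rule sum_bounded_above) (unfold \<alpha>_def, rule good_pow[OF gd lam p])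
  then have bnd: "(\<Sum>j. \<bar>\<alpha> j\<bar> powr p) \<le> real N * Z" using sumeq by simp
  have ps: "(\<Sum>j<n. \<alpha> j * a j y) = f y" if "n \<ge> N" "y > 0" for n y
  proof -
    have "(\<Sum>j<n. \<alpha> j * a j y) = (\<Sum>j<n. G j y)" by (simp add: aG)
    also have "\<dots> = (\<Sum>j<N. G j y)"
    proof -
      have "(\<Sum>j<N + (n - N). G j y) = (\<Sum>j<N. G j y) + (\<Sum>k<n - N. G (N + k) y)" by (rule sum_split_nat)
      then show ?thesis using that Gz by simp
    qed
    also have "\<dots> = f y" using sumf[OF that(2)] .
    finally show ?thesis .
  qed
  have lim: "(\<lambda>n. \<integral>\<^sup>+ y. ennreal (\<bar>f y - (\<Sum>j<n. \<alpha> j * a j y)\<bar> powr p) \<partial>mlam lam) \<longlonglongrightarrow> 0"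
  proof (rule tendsto_eventually)
    show "\<forall>\<^sub>F n in sequentially. (\<integral>\<^sup>+ y. ennreal (\<bar>f y - (\<Sum>j<n. \<alpha> j * a j y)\<bar> powr p) \<partial>mlam lam) = 0"
      unfolding eventually_sequentially
    proof (intro exI allI impI)
      fix n assume "N \<le> n"
      have "(\<integral>\<^sup>+ y. ennreal (\<bar>f y - (\<Sum>j<n. \<alpha> j * a j y)\<bar> powr p) \<partial>mlam lam) = (\<integral>\<^sup>+ y. 0 \<partial>mlam lam)"
        by (rule nn_integral_cong_AE) (use AE_pos[of lam] in \<open>eventually_elim, simp add: ps[OF \<open>N \<le> n\<close>]\<close>)
      then show "(\<integral>\<^sup>+ y. ennreal (\<bar>f y - (\<Sum>j<n. \<alpha> j * a j y)\<bar> powr p) \<partial>mlam lam) = 0" by simp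
    qed
  qed
  have ad: "atomic_decomp lam p f \<alpha> a" unfolding atomic_decomp_def using pa summ lim by blast
  have "Hp_norm_p lam p f \<le> (\<Sum>j. \<bar>\<alpha> j\<bar> powr p)"
    unfolding Hp_norm_p_def
  proof (rule cInf_lower)
    show "(\<Sum>j. \<bar>\<alpha> j\<bar> powr p) \<in> {\<Sum>k. \<bar>\<alpha> k\<bar> powr p |\<alpha> a. atomic_decomp lam p f \<alpha> a}" using ad by blast
    show "bdd_below {\<Sum>k. \<bar>\<alpha> k\<bar> powr p |\<alpha> a. atomic_decomp lam p f \<alpha> a}"
      by (rule bdd_belowI[of _ 0]) (auto simp: atomic_decomp_def intro!: suminf_nonneg)
  qed
  then show ?thesis using ad bnd unfolding in_Hp_def by auto
qed

lemma step_good: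
  fixes s :: real
  assumes lam: "lam > 0" and p: "0 < p" "p \<le> 1" and Q: "Q \<ge> 1"
    and pos: "z1 > 0" "a > 0" "z2 > 0" "b > 0" "z > 0" "c > 0"
    and sub: "Iint z1 a \<subseteq> Iint z c" "Iint z2 b \<subseteq> Iint z c"
    and d1: "measure (mlam lam) (Iint z c) \<le> Q * measure (mlam lam) (Iint z1 a)"
    and d2: "measure (mlam lam) (Iint z c) \<le> Q * measure (mlam lam) (Iint z2 b)"
    and J: "measure (mlam lam) (Iint z c) \<le> mJ"
  shows "good lam p (\<lambda>y. s * (psi lam z1 a y - psi lam z2 b y))
     (\<bar>s\<bar> * (1 / measure (mlam lam) (Iint z1 a) + 1 / measure (mlam lam) (Iint z2 b))) z c
     (2 * Q * (\<bar>s\<bar> powr p * mJ powr (1 - p)))"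
proof -
  note sf = step_facts[OF lam pos(1-4), where s=s]
  show ?thesis unfolding good_def
  proof (intro conjI allI impI)
    show "0 < z" "0 < c" by fact+
    show "(\<lambda>y. s * (psi lam z1 a y - psi lam z2 b y)) \<in> borel_measurable borel" using sf(1) .
    fix y show "y \<notin> Iint z c \<Longrightarrow> s * (psi lam z1 a y - psi lam z2 b y) = 0"
      using sf(4)[where y=y] sub by auto
  next
    fix y show "\<bar>s * (psi lam z1 a y - psi lam z2 b y)\<bar> \<le> \<bar>s\<bar> * (1 / measure (mlam lam) (Iint z1 a) + 1 / measure (mlam lam) (Iint z2 b))"
      using sf(3) .
  next
    show "(\<integral>y. s * (psi lam z1 a y - psi lam z2 b y) \<partial>mlam lam) = 0" using sf(2) .
    show "(\<bar>s\<bar> * (1 / measure (mlam lam) (Iint z1 a) + 1 / measure (mlam lam) (Iint z2 b))) powr p *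
      measure (mlam lam) (Iint z c) \<le> 2 * Q * (\<bar>s\<bar> powr p * mJ powr (1 - p))"
      by (rule step_bound) (use p Q d1 d2 J mI_pos lam pos in auto)
  qed
qed

lemma Iint_mono: "a \<le> b \<Longrightarrow> Iint z a \<subseteq> Iint z b"
  unfolding Iint_def by auto

lemma Iint_sub: "z - c \<le> z1 - a \<Longrightarrow> z1 + a \<le> z + c \<Longrightarrow> Iint z1 a \<subseteq> Iint z c"
  unfolding Iint_def by auto

lemma mI_mono: "lam > 0 \<Longrightarrow> z > 0 \<Longrightarrow> c > 0 \<Longrightarrow> Iint z1 a \<subseteq> Iint z c \<Longrightarrow>
   measure (mlam lam) (Iint z1 a) \<le> measure (mlam lam) (Iint z c)"
  by (rule measure_mono_fmeasurable) (auto simp: fmeasurable_def mI_fin top.not_eq_extremum)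

lemma fpiece_int:
  fixes h :: "real \<Rightarrow> real"
  assumes lam: "lam > 0" and pos: "z > 0" "c > 0" and hm: "h \<in> borel_measurable borel"
    and hb: "\<And>y. \<bar>h y\<bar> \<le> Cc * indicator (Iint z c) y"
  shows "integrable (mlam lam) h" "\<bar>integral\<^sup>L (mlam lam) h\<bar> \<le> Cc * measure (mlam lam) (Iint z c)"
proof -
  have fin: "emeasure (mlam lam) (Iint z c) < top" using mI_fin[OF lam pos] by (simp add: top.not_eq_extremum)
  show hi: "integrable (mlam lam) h" by (rule intg_ind[OF hm _ fin hb]) simp
  have ii: "integrable (mlam lam) (\<lambda>y. Cc * indicator (Iint z c) y)"
    using fin by (auto simp: infinity_ennreal_def)
  have "\<bar>integral\<^sup>L (mlam lam) h\<bar> \<le> (\<integral>y. Cc * indicator (Iint z c) y \<partial>mlam lam)"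
    by (rule integral_abs_bound_integral[OF hi ii hb])
  also have "\<dots> = Cc * measure (mlam lam) (Iint z c)" by simp
  finally show "\<bar>integral\<^sup>L (mlam lam) h\<bar> \<le> Cc * measure (mlam lam) (Iint z c)" .
qed

lemma fpiece_good:
  fixes h :: "real \<Rightarrow> real"
  assumes lam: "lam > 0" and p: "0 < p" "p \<le> 1" and pos: "z > 0" "c > 0" and hm: "h \<in> borel_measurable borel"
    and hb: "\<And>y. \<bar>h y\<bar> \<le> Cc * indicator (Iint z c) y" and Cc: "Cc > 0"
    and \<sigma>: "\<sigma> = integral\<^sup>L (mlam lam) h"
  shows "good lam p (\<lambda>y. h y - \<sigma> * psi lam z c y) (2 * Cc) z c (2 * (Cc powr p * measure (mlam lam) (Iint z c)))"
proof -
  note fi = fpiece_int[OF lam pos hm hb]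
  have m: "measure (mlam lam) (Iint z c) > 0" using mI_pos[OF lam pos] .
  note pi = psi_int[OF lam pos]
  show ?thesis unfolding good_def
  proof (intro conjI allI impI)
    show "0 < z" "0 < c" by fact+
    show "(\<lambda>y. h y - \<sigma> * psi lam z c y) \<in> borel_measurable borel" using hm by measurable
    fix y show "y \<notin> Iint z c \<Longrightarrow> h y - \<sigma> * psi lam z c y = 0"
      using hb[of y] by (simp add: psi_out)
  next
    fix y
    have "\<bar>\<sigma> * psi lam z c y\<bar> \<le> Cc * measure (mlam lam) (Iint z c) * (1 / measure (mlam lam) (Iint z c))"
      unfolding abs_mult using fi(2) \<sigma> psi_nonneg[OF lam pos, of y] psi_le[OF lam pos, of y]
      by (intro mult_mono) auto
    also have "\<dots> = Cc" using m by simp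
    finally have "\<bar>\<sigma> * psi lam z c y\<bar> \<le> Cc" .
    moreover have "\<bar>h y\<bar> \<le> Cc" using hb[of y] Cc by (cases "y \<in> Iint z c") auto
    ultimately show "\<bar>h y - \<sigma> * psi lam z c y\<bar> \<le> 2 * Cc" by linarith
  next
    show "(\<integral>y. h y - \<sigma> * psi lam z c y \<partial>mlam lam) = 0"
      using fi(1) pi \<sigma> by simp
    have "(2 * Cc) powr p = 2 powr p * Cc powr p" using Cc by (simp add: powr_mult)
    moreover have "2 powr p \<le> (2::real)" using p powr_mono[of p 1 2] by simp
    ultimately show "(2 * Cc) powr p * measure (mlam lam) (Iint z c) \<le> 2 * (Cc powr p * measure (mlam lam) (Iint z c))"
      using m by (simp add: mult.assoc mult_right_mono)
  qed
qed

lemma good_mono: "good lam p g B z c Z \<Longrightarrow> Z \<le> Z' \<Longrightarrow> good lam p g B z c Z'"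
  unfolding good_def by auto

lemma core:
  fixes lam p :: real and f :: "real \<Rightarrow> real" and x1 x2 r C1 C2 :: real
  assumes lam: "lam > 0" and p: "0 < p" "p \<le> 1"
    and fm: "f \<in> borel_measurable borel" and f0: "integral\<^sup>L (mlam lam) f = 0"
    and pos: "x1 > 0" "x2 > 0" "r > 0" "C1 > 0" "C2 > 0"
    and fb: "\<forall>x>0. \<bar>f x\<bar> \<le> C1 * indicator (Iint x1 r) x + C2 * indicator (Iint x2 r) x"
    and lt: "x1 < x2" and sep: "x2 - x1 \<ge> 4 * r"
  shows "in_Hp lam p f \<and> Hp_norm_p lam p f \<le>
     (10 + 10 * (8 * 6 powr (2*lam)) * (16 * 10 powr (2*lam))) * ((x2 - x1) / r) powr (1 - p) * log 2 ((x2 - x1) / r) *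
        (C1 powr p * measure (mlam lam) (Iint x1 r) + C2 powr p * measure (mlam lam) (Iint x2 r))"
proof -
  define Qd where "Qd = 8 * 6 powr (2*lam)"
  define Qf where "Qf = 16 * 10 powr (2*lam)"
  have Qd1: "Qd \<ge> 1" unfolding Qd_def using lam ge_one_powr_ge_zero[of 6 "2*lam"] by simp
  have Qf1: "Qf \<ge> 1" unfolding Qf_def using lam ge_one_powr_ge_zero[of 10 "2*lam"] by simp
  define D where "D = x2 - x1"
  define t where "t = D / r"
  have D: "D > 0" "D \<ge> 4 * r" using lt sep pos unfolding D_def by auto
  have t4: "t \<ge> 4" unfolding t_def using D pos by (simp add: field_simps)
  define L where "L = log 2 t"
  have L2: "L \<ge> 2"
  proof -
    have "log 2 4 \<le> log 2 t" using t4 by simp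
    moreover have "log 2 (4::real) = 2"
    proof -
      have "log 2 ((2::real) ^ 2) = 2" by (subst log_pow_cancel) auto
      then show ?thesis by simp
    qed
    ultimately show ?thesis unfolding L_def by simp
  qed
  define K where "K = nat \<lceil>L\<rceil>"
  have K1: "L \<le> real K" "real K < L + 1" unfolding K_def using L2 by linarith+
  have tpow: "t = 2 powr L" unfolding L_def using t4 by simp
  define \<rho> where "\<rho> k = r * 2 ^ k" for k :: nat
  have \<rho>pos: "\<rho> k > 0" for k unfolding \<rho>_def using pos by simp
  have \<rho>0: "\<rho> 0 = r" unfolding \<rho>_def by simp
  have \<rho>S: "\<rho> (Suc k) = 2 * \<rho> k" for k unfolding \<rho>_def by simp
  have \<rho>mono: "k \<le> k' \<Longrightarrow> \<rho> k \<le> \<rho> k'" for k k' unfolding \<rho>_def using pos by simp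
  have DK: "D \<le> \<rho> K" "\<rho> K < 2 * D"
  proof -
    have "(2::real) ^ K = 2 powr (real K)" by (simp add: powr_realpow)
    moreover have "2 powr L \<le> 2 powr (real K)" using K1 by simp
    moreover have "2 powr (real K) < 2 powr (L + 1)" using K1 by simp
    moreover have "2 powr (L + 1) = 2 * t" using tpow by (simp add: powr_add)
    ultimately have "t \<le> 2 ^ K" "2 ^ K < 2 * t" using tpow by auto
    then show "D \<le> \<rho> K" "\<rho> K < 2 * D" unfolding \<rho>_def t_def using pos by (auto simp: field_simps)
  qed
  define I1 where "I1 = Iint x1 r"
  define I2 where "I2 = Iint x2 r"
  define m1 where "m1 = measure (mlam lam) I1"
  define m2 where "m2 = measure (mlam lam) I2"
  have m1pos: "m1 > 0" unfolding m1_def I1_def using mI_pos lam pos by auto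
  have m2pos: "m2 > 0" unfolding m2_def I2_def using mI_pos lam pos by auto
  have disj: "y \<in> I1 \<Longrightarrow> y \<notin> I2" for y unfolding I1_def I2_def Iint_def using sep pos by auto
  have Ipos: "y \<in> Iint z c \<Longrightarrow> y > 0" for y z c unfolding Iint_def by auto
  define f1 where "f1 y = f y * indicator I1 y" for y
  define f2 where "f2 y = f y * indicator I2 y" for y
  have f1m: "f1 \<in> borel_measurable borel" unfolding f1_def I1_def using fm by measurable
  have f2m: "f2 \<in> borel_measurable borel" unfolding f2_def I2_def using fm by measurable
  have f1b: "\<bar>f1 y\<bar> \<le> C1 * indicator (Iint x1 r) y" for y
  proof (cases "y \<in> I1")
    case True
    then have "y > 0" "y \<notin> I2" using disj Ipos unfolding I1_def by auto
    then show ?thesis using fb True unfolding f1_def I1_def I2_def by auto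
  qed (auto simp: f1_def I1_def)
  have f2b: "\<bar>f2 y\<bar> \<le> C2 * indicator (Iint x2 r) y" for y
  proof (cases "y \<in> I2")
    case True
    then have "y > 0" "y \<notin> I1" using disj Ipos unfolding I2_def by auto
    then show ?thesis using fb True unfolding f2_def I1_def I2_def by auto
  qed (auto simp: f2_def I2_def)
  have ffs: "f y = f1 y + f2 y" if "y > 0" for y
  proof -
    have "\<bar>f y\<bar> \<le> C1 * indicator I1 y + C2 * indicator I2 y" using fb that unfolding I1_def I2_def by auto
    then show ?thesis unfolding f1_def f2_def using disj[of y]
      by (cases "y \<in> I1"; cases "y \<in> I2") auto
  qed
  note fi1 = fpiece_int[OF lam pos(1) pos(3) f1m f1b]
  note fi2 = fpiece_int[OF lam pos(2) pos(3) f2m f2b]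
  define s where "s = integral\<^sup>L (mlam lam) f1"
  have s2: "integral\<^sup>L (mlam lam) f2 = - s"
  proof -
    have "integral\<^sup>L (mlam lam) f = integral\<^sup>L (mlam lam) (\<lambda>y. f1 y + f2 y)"
      by (rule integral_cong_AE) (use fm f1m f2m AE_pos[of lam] ffs in \<open>auto simp: meas_mlam\<close>)
    also have "\<dots> = s + integral\<^sup>L (mlam lam) f2" unfolding s_def using fi1(1) fi2(1) by simp
    finally show ?thesis using f0 by simp
  qed
  have sC2: "\<bar>s\<bar> \<le> C2 * m2" using fi2(2) s2 unfolding m2_def I2_def by simp
  define J where "J = Iint x1 (\<rho> (Suc K))"
  define mJ where "mJ = measure (mlam lam) J"
  have mJpos: "mJ > 0" unfolding mJ_def J_def using mI_pos lam pos \<rho>pos by auto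
  have mJfar: "mJ \<le> Qf * t * m2"
  proof -
    have "mJ \<le> Qf * ((x2 - x1) / r) * measure (mlam lam) (Iint x2 r)"
      unfolding mJ_def J_def Qf_def
      by (rule far) (use lam pos lt \<rho>pos DK \<rho>S D_def in auto)
    then show ?thesis unfolding t_def D_def m2_def I2_def .
  qed
  define S where "S = C1 powr p * m1 + C2 powr p * m2"
  have S0: "C1 powr p * m1 \<ge> 0" "C2 powr p * m2 \<ge> 0" using m1pos m2pos by auto
  have tp1: "t powr (1 - p) \<ge> 1" using t4 p by (intro ge_one_powr_ge_zero) auto
  have E: "\<bar>s\<bar> powr p * mJ powr (1 - p) \<le> Qf * t powr (1 - p) * S"
  proof -
    have a: "\<bar>s\<bar> powr p \<le> C2 powr p * m2 powr p"
    proof -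
      have "\<bar>s\<bar> powr p \<le> (C2 * m2) powr p" using sC2 p by (intro powr_mono2) auto
      then show ?thesis using pos m2pos by (simp add: powr_mult)
    qed
    have b: "mJ powr (1 - p) \<le> Qf * t powr (1 - p) * m2 powr (1 - p)"
    proof -
      have "mJ powr (1 - p) \<le> (Qf * t * m2) powr (1 - p)" using mJfar mJpos p by (intro powr_mono2) auto
      also have "\<dots> = Qf powr (1 - p) * t powr (1 - p) * m2 powr (1 - p)"
        using Qf1 t4 m2pos by (simp add: powr_mult)
      also have "\<dots> \<le> Qf * t powr (1 - p) * m2 powr (1 - p)"
      proof -
        have "Qf powr (1 - p) \<le> Qf powr 1" using Qf1 p by (intro powr_mono) auto
        then show ?thesis using Qf1 by (intro mult_right_mono) auto
      qed
      finally show ?thesis .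
    qed
    have "\<bar>s\<bar> powr p * mJ powr (1 - p) \<le> (C2 powr p * m2 powr p) * (Qf * t powr (1 - p) * m2 powr (1 - p))"
      using a b by (intro mult_mono) auto
    also have "\<dots> = Qf * t powr (1 - p) * (C2 powr p * (m2 powr p * m2 powr (1 - p)))" by (simp add: ac_simps)
    also have "m2 powr p * m2 powr (1 - p) = m2" using m2pos by (simp flip: powr_add)
    also have "Qf * t powr (1 - p) * (C2 powr p * m2) \<le> Qf * t powr (1 - p) * S"
      unfolding S_def using S0 Qf1 tp1 by (intro mult_left_mono) auto
    finally show ?thesis .
  qed
  define Z where "Z = 2 * (C1 powr p * m1) + 2 * (C2 powr p * m2) + 2 * Qd * (\<bar>s\<bar> powr p * mJ powr (1 - p))"
  have EZ0: "\<bar>s\<bar> powr p * mJ powr (1 - p) \<ge> 0" by simp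
  have Z1: "2 * (C1 powr p * m1) \<le> Z" "2 * (C2 powr p * m2) \<le> Z" "2 * Qd * (\<bar>s\<bar> powr p * mJ powr (1 - p)) \<le> Z"
    "0 \<le> Z" unfolding Z_def using S0 EZ0 Qd1 by auto
  have Zb: "Z \<le> (2 + 2 * Qd * Qf) * t powr (1 - p) * S"
  proof -
    have "2 * Qd * (\<bar>s\<bar> powr p * mJ powr (1 - p)) \<le> 2 * Qd * (Qf * t powr (1 - p) * S)"
      using E Qd1 by (intro mult_left_mono) auto
    moreover have "2 * S \<le> 2 * t powr (1 - p) * S" using tp1 S0 unfolding S_def by (intro mult_right_mono) auto
    ultimately show ?thesis unfolding Z_def S_def by (simp add: algebra_simps)
  qed
  define mA where "mA k = measure (mlam lam) (Iint x1 (\<rho> k))" for k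
  define mB where "mB k = measure (mlam lam) (Iint x2 (\<rho> k))" for k
  define G where "G j = (if j = 0 then (\<lambda>y. f1 y - s * psi lam x1 r y)
       else if j = 1 then (\<lambda>y. f2 y - (- s) * psi lam x2 r y)
       else if j = 2 then (\<lambda>y. s * (psi lam x1 (\<rho> K) y - psi lam x2 (\<rho> K) y))
       else if j < 3 + K then (\<lambda>y. s * (psi lam x1 (\<rho> (j - 3)) y - psi lam x1 (\<rho> (Suc (j - 3))) y))
       else if j < 3 + 2 * K then (\<lambda>y. s * (psi lam x2 (\<rho> (Suc (j - 3 - K))) y - psi lam x2 (\<rho> (j - 3 - K)) y))
       else (\<lambda>y. 0))" for j
  define BB where "BB j = (if j = 0 then 2 * C1
       else if j = 1 then 2 * C2
       else if j = 2 then \<bar>s\<bar> * (1 / mA K + 1 / mB K)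
       else if j < 3 + K then \<bar>s\<bar> * (1 / mA (j - 3) + 1 / mA (Suc (j - 3)))
       else if j < 3 + 2 * K then \<bar>s\<bar> * (1 / mB (Suc (j - 3 - K)) + 1 / mB (j - 3 - K))
       else 0)" for j
  define cen where "cen j = (if j = 1 \<or> (3 + K \<le> j \<and> j < 3 + 2 * K) then x2 else x1)" for j
  define rad where "rad j = (if j \<le> 1 then r else if j = 2 then \<rho> (Suc K)
       else if j < 3 + K then \<rho> (Suc (j - 3))
       else if j < 3 + 2 * K then \<rho> (Suc (j - 3 - K)) else r)" for j
  have mJ_le: "mJ \<le> Qd * mJ" using Qd1 mJpos by simp
  have goodj: "good lam p (G j) (BB j) (cen j) (rad j) Z" for j
  proof -
    have "j = 0 \<or> j = 1 \<or> j = 2 \<or> (\<exists>k<K. j = 3 + k) \<or> (\<exists>k<K. j = 3 + K + k) \<or> j \<ge> 3 + 2 * K"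
      by presburger
    moreover
    { assume j: "j = 0"
      have "good lam p (\<lambda>y. f1 y - s * psi lam x1 r y) (2 * C1) x1 r (2 * (C1 powr p * measure (mlam lam) (Iint x1 r)))"
        by (rule fpiece_good[OF lam p pos(1) pos(3) f1m f1b pos(4)]) (simp add: s_def)
      moreover have "G j = (\<lambda>y. f1 y - s * psi lam x1 r y)" "BB j = 2 * C1" "cen j = x1" "rad j = r"
        using j unfolding G_def BB_def cen_def rad_def by simp_all
      ultimately have ?thesis using Z1 unfolding m1_def I1_def by (auto elim!: good_mono) }
    moreover
    { assume j: "j = 1"
      have "good lam p (\<lambda>y. f2 y - (- s) * psi lam x2 r y) (2 * C2) x2 r (2 * (C2 powr p * measure (mlam lam) (Iint x2 r)))"
        by (rule fpiece_good[OF lam p pos(2) pos(3) f2m f2b pos(5)]) (simp add: s2)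
      moreover have "G j = (\<lambda>y. f2 y - (- s) * psi lam x2 r y)" "BB j = 2 * C2" "cen j = x2" "rad j = r"
        using j unfolding G_def BB_def cen_def rad_def by simp_all
      ultimately have ?thesis using Z1 unfolding m2_def I2_def by (auto elim!: good_mono) }
    moreover
    { assume j: "j = 2"
      have "good lam p (\<lambda>y. s * (psi lam x1 (\<rho> K) y - psi lam x2 (\<rho> K) y)) (\<bar>s\<bar> * (1 / mA K + 1 / mB K))
              x1 (\<rho> (Suc K)) (2 * Qd * (\<bar>s\<bar> powr p * mJ powr (1 - p)))"
        unfolding mA_def mB_def
      proof (rule step_good[OF lam p Qd1])
        show "0 < x1" "0 < \<rho> K" "0 < x2" "0 < \<rho> K" "0 < x1" "0 < \<rho> (Suc K)" using pos \<rho>pos by auto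
        show "Iint x1 (\<rho> K) \<subseteq> Iint x1 (\<rho> (Suc K))" by (rule Iint_mono) (simp add: \<rho>mono)
        show "Iint x2 (\<rho> K) \<subseteq> Iint x1 (\<rho> (Suc K))" by (rule Iint_sub) (use DK \<rho>S D_def lt in auto)
        show "measure (mlam lam) (Iint x1 (\<rho> (Suc K))) \<le> Qd * measure (mlam lam) (Iint x1 (\<rho> K))"
          unfolding Qd_def by (rule doubling) (use lam pos \<rho>pos[of K] \<rho>S in auto)
        show "measure (mlam lam) (Iint x1 (\<rho> (Suc K))) \<le> Qd * measure (mlam lam) (Iint x2 (\<rho> K))"
          unfolding Qd_def by (rule doubling) (use lam pos \<rho>pos[of K] \<rho>S lt in auto)
        show "measure (mlam lam) (Iint x1 (\<rho> (Suc K))) \<le> mJ" unfolding mJ_def J_def by simp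
      qed
      moreover have "G j = (\<lambda>y. s * (psi lam x1 (\<rho> K) y - psi lam x2 (\<rho> K) y))" "BB j = \<bar>s\<bar> * (1 / mA K + 1 / mB K)"
        "cen j = x1" "rad j = \<rho> (Suc K)"
        using j unfolding G_def BB_def cen_def rad_def by simp_all
      ultimately have ?thesis using Z1 by (auto elim!: good_mono) }
    moreover
    { fix k assume k: "k < K" "j = 3 + k"
      have "good lam p (\<lambda>y. s * (psi lam x1 (\<rho> k) y - psi lam x1 (\<rho> (Suc k)) y)) (\<bar>s\<bar> * (1 / mA k + 1 / mA (Suc k)))
              x1 (\<rho> (Suc k)) (2 * Qd * (\<bar>s\<bar> powr p * mJ powr (1 - p)))"
        unfolding mA_def
      proof (rule step_good[OF lam p Qd1])
        show "0 < x1" "0 < \<rho> k" "0 < x1" "0 < \<rho> (Suc k)" "0 < x1" "0 < \<rho> (Suc k)" using pos \<rho>pos by auto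
        show "Iint x1 (\<rho> k) \<subseteq> Iint x1 (\<rho> (Suc k))" by (rule Iint_mono) (simp add: \<rho>mono)
        show "Iint x1 (\<rho> (Suc k)) \<subseteq> Iint x1 (\<rho> (Suc k))" by simp
        show "measure (mlam lam) (Iint x1 (\<rho> (Suc k))) \<le> Qd * measure (mlam lam) (Iint x1 (\<rho> k))"
          unfolding Qd_def by (rule doubling) (use lam pos \<rho>pos[of k] \<rho>S in auto)
        show "measure (mlam lam) (Iint x1 (\<rho> (Suc k))) \<le> Qd * measure (mlam lam) (Iint x1 (\<rho> (Suc k)))"
          using Qd1 mI_pos[OF lam pos(1) \<rho>pos[of "Suc k"]] by simp
        show "measure (mlam lam) (Iint x1 (\<rho> (Suc k))) \<le> mJ" unfolding mJ_def J_def
          by (rule mI_mono) (use lam pos \<rho>pos k in \<open>auto intro!: Iint_mono \<rho>mono\<close>)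
      qed
      moreover have "G j = (\<lambda>y. s * (psi lam x1 (\<rho> k) y - psi lam x1 (\<rho> (Suc k)) y))"
        "BB j = \<bar>s\<bar> * (1 / mA k + 1 / mA (Suc k))" "cen j = x1" "rad j = \<rho> (Suc k)"
        using k unfolding G_def BB_def cen_def rad_def by simp_all
      ultimately have ?thesis using Z1 by (auto elim!: good_mono) }
    moreover
    { fix k assume k: "k < K" "j = 3 + K + k"
      have "good lam p (\<lambda>y. s * (psi lam x2 (\<rho> (Suc k)) y - psi lam x2 (\<rho> k) y)) (\<bar>s\<bar> * (1 / mB (Suc k) + 1 / mB k))
              x2 (\<rho> (Suc k)) (2 * Qd * (\<bar>s\<bar> powr p * mJ powr (1 - p)))"
        unfolding mB_def
      proof (rule step_good[OF lam p Qd1])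
        show "0 < x2" "0 < \<rho> (Suc k)" "0 < x2" "0 < \<rho> k" "0 < x2" "0 < \<rho> (Suc k)" using pos \<rho>pos by auto
        show "Iint x2 (\<rho> k) \<subseteq> Iint x2 (\<rho> (Suc k))" by (rule Iint_mono) (simp add: \<rho>mono)
        show "Iint x2 (\<rho> (Suc k)) \<subseteq> Iint x2 (\<rho> (Suc k))" by simp
        show "measure (mlam lam) (Iint x2 (\<rho> (Suc k))) \<le> Qd * measure (mlam lam) (Iint x2 (\<rho> k))"
          unfolding Qd_def by (rule doubling) (use lam pos \<rho>pos[of k] \<rho>S in auto)
        show "measure (mlam lam) (Iint x2 (\<rho> (Suc k))) \<le> Qd * measure (mlam lam) (Iint x2 (\<rho> (Suc k)))"
          using Qd1 mI_pos[OF lam pos(2) \<rho>pos[of "Suc k"]] by simp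
        have "\<rho> (Suc k) \<le> \<rho> K" using k by (intro \<rho>mono) auto
        then show "measure (mlam lam) (Iint x2 (\<rho> (Suc k))) \<le> mJ" unfolding mJ_def J_def
          by (intro mI_mono Iint_sub) (use lam pos \<rho>pos DK \<rho>S D_def lt in auto)
      qed
      moreover have "G j = (\<lambda>y. s * (psi lam x2 (\<rho> (Suc k)) y - psi lam x2 (\<rho> k) y))"
        "BB j = \<bar>s\<bar> * (1 / mB (Suc k) + 1 / mB k)" "cen j = x2" "rad j = \<rho> (Suc k)"
        using k unfolding G_def BB_def cen_def rad_def by simp_all
      ultimately have ?thesis using Z1 by (auto elim!: good_mono) }
    moreover
    { assume j: "j \<ge> 3 + 2 * K"
      have "G j = (\<lambda>y. 0)" "BB j = 0" "cen j = x1" "rad j = r" using j unfolding G_def BB_def cen_def rad_def by auto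
      then have ?thesis unfolding good_def using pos Z1 p by auto }
    ultimately show ?thesis by blast
  qed
  have sumf: "(\<Sum>j<3 + 2 * K. G j y) = f y" if y: "y > 0" for y
  proof -
    have GA: "k < K \<Longrightarrow> G (3 + k) y = s * psi lam x1 (\<rho> k) y - s * psi lam x1 (\<rho> (Suc k)) y" for k
      by (simp add: G_def right_diff_distrib)
    have GB: "k < K \<Longrightarrow> G (3 + (K + k)) y = s * psi lam x2 (\<rho> (Suc k)) y - s * psi lam x2 (\<rho> k) y" for k
      by (simp add: G_def right_diff_distrib)
    have e1: "(\<Sum>j<3 + (K + K). G j y) = (\<Sum>j<3. G j y) + (\<Sum>k<K + K. G (3 + k) y)" by (rule sum_split_nat)
    have e2: "(\<Sum>k<K + K. G (3 + k) y) = (\<Sum>k<K. G (3 + k) y) + (\<Sum>k<K. G (3 + (K + k)) y)"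
      by (rule sum_split_nat)
    have e3: "(\<Sum>k<K. G (3 + k) y) = s * psi lam x1 (\<rho> 0) y - s * psi lam x1 (\<rho> K) y"
    proof -
      have "(\<Sum>k<K. G (3 + k) y) = (\<Sum>k<K. s * psi lam x1 (\<rho> k) y - s * psi lam x1 (\<rho> (Suc k)) y)"
        by (rule sum.cong) (auto simp: GA)
      also have "\<dots> = s * psi lam x1 (\<rho> 0) y - s * psi lam x1 (\<rho> K) y" by (rule sum_lessThan_telescope')
      finally show ?thesis .
    qed
    have e4: "(\<Sum>k<K. G (3 + (K + k)) y) = s * psi lam x2 (\<rho> K) y - s * psi lam x2 (\<rho> 0) y"
    proof -
      have "(\<Sum>k<K. G (3 + (K + k)) y) = (\<Sum>k<K. s * psi lam x2 (\<rho> (Suc k)) y - s * psi lam x2 (\<rho> k) y)"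
        by (rule sum.cong) (auto simp: GB)
      also have "\<dots> = s * psi lam x2 (\<rho> K) y - s * psi lam x2 (\<rho> 0) y" by (rule sum_lessThan_telescope)
      finally show ?thesis .
    qed
    have e5: "(\<Sum>j<3. G j y) = G 0 y + G 1 y + G 2 y" by (simp add: numeral_3_eq_3 numeral_2_eq_2)
    have e6: "G 0 y + G 1 y + G 2 y = f1 y + f2 y - s * psi lam x1 r y + s * psi lam x2 r y
       + s * psi lam x1 (\<rho> K) y - s * psi lam x2 (\<rho> K) y"
      by (simp add: G_def algebra_simps)
    have "3 + 2 * K = 3 + (K + K)" by simp
    then have "(\<Sum>j<3 + 2 * K. G j y) = f1 y + f2 y" using e1 e2 e3 e4 e5 e6 \<rho>0 by (simp add: add.commute)
    then show ?thesis using ffs[OF y] by simp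
  qed
  have zero: "BB j = 0" if "j \<ge> 3 + 2 * K" for j using that unfolding BB_def by auto
  have main: "in_Hp lam p f \<and> Hp_norm_p lam p f \<le> real (3 + 2 * K) * Z"
    by (rule decomp_from_good[OF lam p(1) goodj zero sumf])
  have NK: "real (3 + 2 * K) \<le> 5 * L" using K1 L2 by simp
  have "real (3 + 2 * K) * Z \<le> (5 * L) * ((2 + 2 * Qd * Qf) * t powr (1 - p) * S)"
    using NK Zb Z1(4) L2 by (intro mult_mono) auto
  also have "\<dots> = (10 + 10 * Qd * Qf) * t powr (1 - p) * L * S" by (simp add: algebra_simps)
  finally show ?thesis using main unfolding Qd_def Qf_def t_def D_def L_def S_def m1_def m2_def I1_def I2_def
    by auto
qed

theorem lemma3p1:
  fixes lam p :: real
  assumes "lam > 0" and "(2 * lam + 1) / (2 * lam + 2) < p" and "p \<le> 1"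
  shows "\<exists>C>0. \<forall>(f :: real \<Rightarrow> real) x1 x2 r C1 C2.
     f \<in> borel_measurable borel \<longrightarrow>
     integral\<^sup>L (mlam lam) f = 0 \<longrightarrow>
     x1 > 0 \<longrightarrow> x2 > 0 \<longrightarrow> r > 0 \<longrightarrow> C1 > 0 \<longrightarrow> C2 > 0 \<longrightarrow>
     (\<forall>x>0. \<bar>f x\<bar> \<le> C1 * indicator (Iint x1 r) x + C2 * indicator (Iint x2 r) x) \<longrightarrow>
     \<bar>x1 - x2\<bar> \<ge> 4 * r \<longrightarrow>
     in_Hp lam p f \<and>
     Hp_norm_p lam p f \<le> C * (\<bar>x1 - x2\<bar> / r) powr (1 - p) * log 2 (\<bar>x1 - x2\<bar> / r) *
        (C1 powr p * measure (mlam lam) (Iint x1 r) + C2 powr p * measure (mlam lam) (Iint x2 r))"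
proof -
  have p0: "p > 0"
  proof -
    have "(2 * lam + 1) / (2 * lam + 2) > 0" using assms(1) by (intro divide_pos_pos) auto
    then show ?thesis using assms(2) by linarith
  qed
  define C where "C = 10 + 10 * (8 * 6 powr (2*lam)) * (16 * 10 powr (2*lam))"
  have Cpos: "C > 0" unfolding C_def by (intro add_pos_nonneg) auto
  show ?thesis
  proof (intro exI[of _ C] conjI[OF Cpos] allI impI)
    fix f :: "real \<Rightarrow> real" and x1 x2 r C1 C2 :: real
    assume fm: "f \<in> borel_measurable borel" and f0: "integral\<^sup>L (mlam lam) f = 0"
      and pos: "x1 > 0" "x2 > 0" "r > 0" "C1 > 0" "C2 > 0"
      and fb: "\<forall>x>0. \<bar>f x\<bar> \<le> C1 * indicator (Iint x1 r) x + C2 * indicator (Iint x2 r) x"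
      and sep: "\<bar>x1 - x2\<bar> \<ge> 4 * r"
    consider "x1 < x2" | "x2 < x1" using sep pos by linarith
    then show "in_Hp lam p f \<and>
     Hp_norm_p lam p f \<le> C * (\<bar>x1 - x2\<bar> / r) powr (1 - p) * log 2 (\<bar>x1 - x2\<bar> / r) *
        (C1 powr p * measure (mlam lam) (Iint x1 r) + C2 powr p * measure (mlam lam) (Iint x2 r))"
    proof cases
      case 1
      have "\<bar>x1 - x2\<bar> = x2 - x1" using 1 by simp
      moreover have "x2 - x1 \<ge> 4 * r" using sep 1 by simp
      ultimately show ?thesis using core[OF assms(1) p0 assms(3) fm f0 pos fb 1] unfolding C_def by simp
    next
      case 2
      have "\<bar>x1 - x2\<bar> = x1 - x2" using 2 by simp
      moreover have "x1 - x2 \<ge> 4 * r" using sep 2 by simp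
      moreover have fb': "\<forall>x>0. \<bar>f x\<bar> \<le> C2 * indicator (Iint x2 r) x + C1 * indicator (Iint x1 r) x"
        using fb by (simp add: add.commute)
      ultimately show ?thesis using core[OF assms(1) p0 assms(3) fm f0 pos(2,1,3,5,4) fb' 2] unfolding C_def
        by (simp add: add.commute)
    qed
  qed
qed

end
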